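(* Let $n,l$ be positive integers and $p$ a prime such that $p^l$ divides $n$ but $p^{l+1}$ does not divide $n$. Let $S\subseteq\mathbb{Z}_n$ with $0\notin S$, $S=-S$, $|S|=p^l$, such that the circulant graph $\mathrm{Cay}(\mathbb{Z}_n,S)$ is connected. Then $\mathrm{Cay}(\mathbb{Z}_n,S)$ admits a total perfect code if and only if $s\not\equiv s' \pmod{p^l}$ for all distinct $s,s'\in S$.
   Context: $\mathbb{Z}_n$ is the additive group of integers modulo $n$; elements are identified with integers in $\{0,1,\dots,n-1\}$. For an inverse-closed subset $S$ of $\mathbb{Z}_n$ not containing $0$, the circulant graph $\mathrm{Cay}(\mathbb{Z}_n,S)$ has vertex set $\mathbb{Z}_n$, with $u,v$ adjacent iff $v-u\in S$; its degree is $|S|$. A total perfect code in a graph $\Gamma=(V,E)$ is a subset $C\subseteq V$ such that every vertex of $V$ has exactly one neighbour in $C$. *)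

theory Defs
  imports Main "HOL-Computational_Algebra.Primes"
begin

text \<open>Z_n is modelled by the carrier {0..<n} of natural numbers with arithmetic mod n.\<close>

definition circ_adj :: "nat \<Rightarrow> nat set \<Rightarrow> nat \<Rightarrow> nat \<Rightarrow> bool" where
  "circ_adj n S u v \<longleftrightarrow> u < n \<and> v < n \<and> nat ((int v - int u) mod int n) \<in> S"

definition connection_set :: "nat \<Rightarrow> nat set \<Rightarrow> bool" where
  "connection_set n S \<longleftrightarrow> S \<subseteq> {0..<n} \<and> 0 \<notin> S \<and> (\<forall>s\<in>S. (n - s) mod n \<in> S)"

definition circ_connected :: "nat \<Rightarrow> nat set \<Rightarrow> bool" where
  "circ_connected n S \<longleftrightarrow> (\<forall>u<n. \<forall>v<n. (circ_adj n S)\<^sup>*\<^sup>* u v)"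

definition is_total_perfect_code :: "nat \<Rightarrow> nat set \<Rightarrow> nat set \<Rightarrow> bool" where
  "is_total_perfect_code n S C \<longleftrightarrow> C \<subseteq> {0..<n} \<and>
     (\<forall>v<n. \<exists>!c. c \<in> C \<and> circ_adj n S v c)"

end

theory Submission imports Defs "HOL-Computational_Algebra.Polynomial" "HOL-Number_Theory.Cong"
begin

definition om :: "nat \<Rightarrow> complex" where "om n = cis (2*pi/real n)"

lemma om_pow: "om n ^ k = cis (2*pi*real k/real n)"
  by (simp add: om_def DeMoivre mult_ac)

lemma om_pow_n: "n > 0 \<Longrightarrow> om n ^ n = 1"
  by (simp add: om_pow complex_eq_iff)

lemma om_pow_mod: assumes "n > 0" shows "om n ^ k = om n ^ (k mod n)"
proof -
  have "om n ^ k = om n ^ (n * (k div n) + k mod n)" by simp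
  also have "\<dots> = (om n ^ n) ^ (k div n) * om n ^ (k mod n)"
    by (simp only: power_add power_mult)
  finally show ?thesis using om_pow_n[OF assms] by simp
qed

lemma om_pow_eq_1: assumes "n > 0" shows "om n ^ k = 1 \<longleftrightarrow> n dvd k"
proof
  assume h: "om n ^ k = 1"
  have inj: "inj_on (\<lambda>k. cis (2 * pi * real k / real n)) {..<n}"
    using bij_betw_roots_unity[OF assms] by (simp add: bij_betw_def)
  have "cis (2 * pi * real (k mod n) / real n) = cis (2 * pi * real 0 / real n)"
    using h om_pow_mod[OF assms, of k] by (simp add: om_pow)
  then have "k mod n = 0" using inj_onD[OF inj] assms by force
  then show "n dvd k" by auto
next
  assume "n dvd k" then show "om n ^ k = 1"
    using om_pow_mod[OF assms, of k] by simp
qed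

lemma geo: assumes "n > 0"
  shows "(\<Sum>i<n. (om n ^ k) ^ i) = (if n dvd k then of_nat n else 0)"
proof (cases "n dvd k")
  case True
  then have "om n ^ k = 1" using om_pow_eq_1[OF assms] by simp
  then show ?thesis using True by simp
next
  case False
  then have ne: "om n ^ k \<noteq> 1" using om_pow_eq_1[OF assms] by simp
  have "(om n ^ k) ^ n = 1"
    by (metis om_pow_n[OF assms] power_mult mult.commute power_one)
  then show ?thesis using False ne by (simp add: geometric_sum)
qed

definition ev :: "int poly \<Rightarrow> complex \<Rightarrow> complex" where
  "ev Q z = poly (map_poly of_int Q) z"

lemma map_poly_of_int_mult:
  "map_poly (of_int :: int \<Rightarrow> complex) (p * q) = map_poly of_int p * map_poly of_int q"
  by (rule poly_eqI) (simp add: coeff_map_poly coeff_mult)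

lemma map_poly_of_int_add:
  "map_poly (of_int :: int \<Rightarrow> complex) (p + q) = map_poly of_int p + map_poly of_int q"
  by (rule poly_eqI) (simp add: coeff_map_poly)

lemma ev_mult: "ev (p * q) z = ev p z * ev q z"
  by (simp add: ev_def map_poly_of_int_mult)

lemma ev_add: "ev (p + q) z = ev p z + ev q z"
  by (simp add: ev_def map_poly_of_int_add)

lemma ev_0: "ev 0 z = 0" by (simp add: ev_def)
lemma ev_1: "ev 1 z = 1" by (simp add: ev_def)

lemma ev_sum: "ev (\<Sum>i\<in>A. f i) z = (\<Sum>i\<in>A. ev (f i) z)"
  by (induction A rule: infinite_finite_induct) (auto simp: ev_add ev_0)

lemma ev_power: "ev (p ^ k) z = ev p z ^ k"
  by (induction k) (auto simp: ev_mult ev_1)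

lemma ev_monom: "ev (Polynomial.monom 1 a) z = z ^ a"
proof -
  have "map_poly (of_int :: int \<Rightarrow> complex) (Polynomial.monom 1 a) = Polynomial.monom 1 a"
    by (rule poly_eqI) (simp add: coeff_map_poly coeff_monom)
  then show ?thesis by (simp add: ev_def poly_monom)
qed

lemma ev_of_nat: "ev (of_nat k) z = of_nat k"
proof -
  have "map_poly (of_int :: int \<Rightarrow> complex) (of_nat k) = of_nat k"
    by (rule poly_eqI) (simp add: coeff_map_poly of_nat_poly coeff_pCons split: nat.split)
  then show ?thesis by (simp add: ev_def)
qed

lemma ev_altdef: "ev Q z = (\<Sum>j\<le>degree Q. of_int (coeff Q j) * z ^ j)"
proof -
  have "degree (map_poly (of_int :: int \<Rightarrow> complex) Q) = degree Q"
    by (rule degree_map_poly) simp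
  then show ?thesis by (simp add: ev_def poly_altdef coeff_map_poly)
qed

lemma dvd_shift_iff: assumes "(g::nat) < n" shows "n dvd (n - g + j) \<longleftrightarrow> j mod n = g"
proof -
  have "n dvd (n - g + j) \<longleftrightarrow> int n dvd (int j - int g + int n)"
    using assms by (metis int_dvd_int_iff of_nat_add of_nat_diff less_imp_le_nat add.commute
        diff_add_eq)
  also have "\<dots> \<longleftrightarrow> int n dvd (int j - int g)"
    by (metis dvd_add_left_iff dvd_refl)
  also have "\<dots> \<longleftrightarrow> [int j = int g] (mod int n)"
    by (simp add: cong_iff_dvd_diff)
  also have "\<dots> \<longleftrightarrow> [j = g] (mod n)" by (simp add: cong_int_iff)
  also have "\<dots> \<longleftrightarrow> j mod n = g" using assms by (simp add: cong_def)
  finally show ?thesis .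
qed

lemma inversion:
  assumes "n > 0" "g < n"
  shows "(\<Sum>k<n. om n ^ (k * (n - g)) * ev Q (om n ^ k)) =
         of_nat n * of_int (\<Sum>j\<le>degree Q. if j mod n = g then coeff Q j else 0)"
proof -
  have "(\<Sum>k<n. om n ^ (k * (n - g)) * ev Q (om n ^ k)) =
        (\<Sum>k<n. \<Sum>j\<le>degree Q. of_int (coeff Q j) * (om n ^ (n - g + j)) ^ k)"
  proof -
    have e: "om n ^ (k*(n-g)) * (om n ^ k)^j = (om n ^(n-g+j))^k" for k j
    proof -
      have "om n ^ (k*(n-g)) * (om n ^ k)^j = om n ^ (k*(n-g) + k*j)"
        by (simp add: power_add power_mult)
      also have "k*(n-g)+k*j = (n-g+j)*k" by (simp add: algebra_simps)
      also have "om n ^ ((n-g+j)*k) = (om n ^(n-g+j))^k" by (simp add: power_mult)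
      finally show ?thesis .
    qed
    show ?thesis unfolding ev_altdef sum_distrib_left
      by (intro sum.cong refl) (metis e mult.assoc mult.commute)
  qed
  also have "\<dots> = (\<Sum>j\<le>degree Q. of_int (coeff Q j) * (\<Sum>k<n. (om n ^ (n - g + j)) ^ k))"
    by (subst sum.swap) (simp add: sum_distrib_left)
  also have "\<dots> = (\<Sum>j\<le>degree Q. of_nat n * of_int (if j mod n = g then coeff Q j else 0))"
    by (intro sum.cong refl) (simp add: geo[OF assms(1)] dvd_shift_iff[OF assms(2)])
  also have "\<dots> = of_nat n * of_int (\<Sum>j\<le>degree Q. if j mod n = g then coeff Q j else 0)"
    by (simp add: sum_distrib_left)
  finally show ?thesis .
qed

lemma frob1:
  fixes x y :: "'a :: comm_ring_1"
  assumes "prime p"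
  shows "\<exists>r. (x + y) ^ p = x ^ p + y ^ p + of_nat p * r"
proof -
  have p0: "p > 0" using assms prime_gt_0_nat by blast
  have "(x + y) ^ p = (\<Sum>k\<le>p. of_nat (p choose k) * x ^ k * y ^ (p - k))"
    by (rule binomial_ring)
  also have "\<dots> = (\<Sum>k\<in>{0,p}. of_nat (p choose k) * x ^ k * y ^ (p - k)) +
      (\<Sum>k\<in>{1..<p}. of_nat (p choose k) * x ^ k * y ^ (p - k))"
  proof -
    have "{..p} = {0,p} \<union> {1..<p}" using p0 by auto
    then show ?thesis by (metis (no_types, lifting) sum.union_disjoint finite.emptyI finite.insertI
      finite_atLeastLessThan Int_emptyI atLeastLessThan_iff insert_iff empty_iff less_irrefl
      less_one not_le)
  qed
  also have "(\<Sum>k\<in>{0,p}. of_nat (p choose k) * x ^ k * y ^ (p - k)) = x ^ p + y ^ p"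
    using p0 by (simp add: add.commute)
  also have "(\<Sum>k\<in>{1..<p}. of_nat (p choose k) * x ^ k * y ^ (p - k)) =
      of_nat p * (\<Sum>k\<in>{1..<p}. of_nat ((p choose k) div p) * x ^ k * y ^ (p - k))"
    unfolding sum_distrib_left
  proof (intro sum.cong refl)
    fix k assume "k \<in> {1..<p}"
    then have "p dvd (p choose k)" using dvd_choose_prime[of k p] assms p0 by auto
    then have "(p choose k) = p * ((p choose k) div p)" by simp
    then show "of_nat (p choose k) * x ^ k * y ^ (p - k) =
        of_nat p * (of_nat ((p choose k) div p) * x ^ k * y ^ (p - k))"
      by (metis of_nat_mult mult.assoc)
  qed
  finally show ?thesis by blast
qed

lemma frob_sum:
  fixes f :: "'b \<Rightarrow> 'a :: comm_ring_1"
  assumes "prime p"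
  shows "\<exists>r. (\<Sum>i\<in>A. f i) ^ p = (\<Sum>i\<in>A. f i ^ p) + of_nat p * r"
proof (induction A rule: infinite_finite_induct)
  case (infinite A) then show ?case using assms prime_gt_0_nat
    by (auto intro: exI[of _ 0] simp: zero_power)
next
  case empty then show ?case using assms prime_gt_0_nat
    by (auto intro: exI[of _ 0] simp: zero_power)
next
  case (insert x F)
  then obtain r where r: "(\<Sum>i\<in>F. f i) ^ p = (\<Sum>i\<in>F. f i ^ p) + of_nat p * r" by blast
  obtain r' where r': "(f x + (\<Sum>i\<in>F. f i)) ^ p = f x ^ p + (\<Sum>i\<in>F. f i) ^ p + of_nat p * r'"
    using frob1[OF assms] by blast
  show ?case using insert r r' by (auto simp: algebra_simps intro!: exI[of _ "r + r'"])
qed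

lemma pow_plus_mult:
  fixes a b :: "'a :: comm_ring_1"
  shows "\<exists>r. (a + of_nat p * b) ^ e = a ^ e + of_nat p * r"
proof (induction e)
  case 0 then show ?case by (auto intro: exI[of _ 0])
next
  case (Suc e)
  then obtain r where r: "(a + of_nat p * b) ^ e = a ^ e + of_nat p * r" by blast
  have "(a + of_nat p * b)^Suc e = (a^e + of_nat p * r) * (a + of_nat p*b)"
    by (metis r power_Suc mult.commute)
  also have "\<dots> = a ^ Suc e + of_nat p * (r * a + a ^ e * b + of_nat p * r * b)"
    by (simp add: algebra_simps)
  finally show ?case by blast
qed

lemma frob_sum_pow:
  fixes f :: "'b \<Rightarrow> 'a :: comm_ring_1"
  assumes "prime p"
  shows "\<exists>r. (\<Sum>i\<in>A. f i) ^ (p ^ l) = (\<Sum>i\<in>A. f i ^ (p ^ l)) + of_nat p * r"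
proof (induction l)
  case 0 then show ?case by (auto intro: exI[of _ 0])
next
  case (Suc l)
  then obtain r where r: "(\<Sum>i\<in>A. f i) ^ (p ^ l) = (\<Sum>i\<in>A. f i ^ (p ^ l)) + of_nat p * r" by blast
  obtain r2 where r2: "((\<Sum>i\<in>A. f i ^ (p ^ l)) + of_nat p * r) ^ p = (\<Sum>i\<in>A. f i ^ (p ^ l)) ^ p + of_nat p * r2"
    using pow_plus_mult by blast
  obtain r3 where r3: "(\<Sum>i\<in>A. f i ^ (p ^ l)) ^ p = (\<Sum>i\<in>A. (f i ^ (p ^ l)) ^ p) + of_nat p * r3"
    using frob_sum[OF assms] by blast
  have "(\<Sum>i\<in>A. f i) ^ (p ^ Suc l) = ((\<Sum>i\<in>A. f i) ^ (p ^ l)) ^ p"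
    by (metis power_mult power_Suc mult.commute)
  also have "\<dots> = (\<Sum>i\<in>A. f i ^ (p ^ Suc l)) + of_nat p * (r2 + r3)"
    unfolding r r2 r3 by (simp add: power_mult mult.commute algebra_simps flip: power_mult)
  finally show ?case by blast
qed

lemma exp_shift: "om n ^ (k*(n-g)) * (om n ^ k)^j = (om n ^(n-g+j))^k"
proof -
  have "om n ^ (k*(n-g)) * (om n ^ k)^j = om n ^ (k*(n-g) + k*j)"
    by (simp add: power_add power_mult)
  also have "k*(n-g)+k*j = (n-g+j)*k" by (simp add: algebra_simps)
  also have "om n ^ ((n-g+j)*k) = (om n ^(n-g+j))^k" by (simp add: power_mult)
  finally show ?thesis .
qed

lemma pow_mod_root: assumes "(z::complex) ^ n = 1" shows "z ^ a = z ^ (a mod n)"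
proof -
  have "z ^ a = z ^ (n * (a div n) + a mod n)" by simp
  also have "\<dots> = (z ^ n) ^ (a div n) * z ^ (a mod n)"
    by (simp only: power_add power_mult)
  finally have "z ^ a = (z ^ n) ^ (a div n) * z ^ (a mod n)" .
  then show ?thesis using assms by simp
qed

lemma tile_bij:
  assumes "finite A" "\<forall>x\<in>A. \<phi> x < n" "\<forall>v<n. \<exists>!x. x\<in>A \<and> \<phi> x = v"
  shows "bij_betw \<phi> A {..<n}"
  unfolding bij_betw_def inj_on_def
proof (intro conjI ballI impI equalityI subsetI)
  fix x y assume "x \<in> A" "y \<in> A" "\<phi> x = \<phi> y"
  then show "x = y" using assms(2,3) by metis
next
  fix v assume "v \<in> \<phi> ` A" then show "v \<in> {..<n}" using assms(2) by auto
next
  fix v assume "v \<in> {..<n}" then show "v \<in> \<phi> ` A" using assms(3) by blast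
qed

definition EE :: "nat \<Rightarrow> int poly \<Rightarrow> nat \<Rightarrow> complex" where
  "EE n Q g = (\<Sum>k<n. om n ^ (k * (n - g)) * ev Q (om n ^ k))"

lemma EE_add: "EE n (P + Q) g = EE n P g + EE n Q g"
  by (simp add: EE_def ev_add distrib_left sum.distrib)

lemma EE_of_nat: "EE n (of_nat p * Q) g = of_nat p * EE n Q g"
  by (simp add: EE_def ev_mult ev_of_nat sum_distrib_left mult_ac)

lemma ev_setsum: "ev (\<Sum>c\<in>C. Polynomial.monom 1 c) z = (\<Sum>c\<in>C. z ^ c)"
  by (simp add: ev_sum ev_monom)

lemma key:
  fixes n p l q :: nat and C S :: "nat set"
  assumes n0: "n > 0" and pp: "prime p" and qdef: "q = p ^ l" and qn: "q dvd n"
    and pm: "\<not> p dvd (n div q)" and CS: "C \<subseteq> {..<n}" "S \<subseteq> {..<n}" and cS: "card S = q"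
    and tile: "\<forall>v<n. \<exists>!x. x \<in> C \<times> S \<and> (fst x + snd x) mod n = v"
  shows "\<forall>v<n. \<exists>!x. x \<in> C \<times> S \<and> (q * fst x + snd x) mod n = v"
proof -
  define m where "m = n div q"
  have q0: "q > 0" using qdef pp prime_gt_0_nat by simp
  have nmq: "n = m * q" using qn m_def by simp
  have m0: "m > 0" using nmq n0 by (cases m) auto
  have fC: "finite C" and fS: "finite S" using CS finite_subset by auto
  have fCS: "finite (C \<times> S)" using fC fS by simp
  have bij1: "bij_betw (\<lambda>x. (fst x + snd x) mod n) (C \<times> S) {..<n}"
    by (rule tile_bij) (use fCS tile n0 in auto)
  have cardCS: "card (C \<times> S) = n" using bij_betw_same_card[OF bij1] by simp
  have cC: "card C = m" using cardCS nmq cS q0 by (simp add: card_cartesian_product)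
  define PC where "PC = (\<Sum>c\<in>C. Polynomial.monom (1::int) c)"
  define PS where "PS = (\<Sum>s\<in>S. Polynomial.monom (1::int) s)"
  define T where "T = (\<Sum>c\<in>C. Polynomial.monom (1::int) c ^ q)"
  obtain R where R: "PC ^ q = T + of_nat p * R"
    using frob_sum_pow[OF pp, of "\<lambda>c. Polynomial.monom (1::int) c" C l]
    unfolding PC_def T_def qdef by blast
  have evPC: "ev PC z = (\<Sum>c\<in>C. z ^ c)" for z unfolding PC_def by (rule ev_setsum)
  have evPS: "ev PS z = (\<Sum>s\<in>S. z ^ s)" for z unfolding PS_def by (rule ev_setsum)
  have prod0: "ev PC (om n ^ k) * ev PS (om n ^ k) = 0" if k: "0 < k" "k < n" for k
  proof -
    define z where "z = om n ^ k"
    have zn: "z ^ n = 1" unfolding z_def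
      by (metis om_pow_n[OF n0] power_mult mult.commute power_one)
    have "ev PC z * ev PS z = (\<Sum>x\<in>C \<times> S. z ^ (fst x + snd x))"
      unfolding evPC evPS sum_product sum.cartesian_product by (simp add: power_add split_beta)
    also have "\<dots> = (\<Sum>x\<in>C \<times> S. z ^ ((fst x + snd x) mod n))"
      using pow_mod_root[OF zn] by simp
    also have "\<dots> = (\<Sum>v<n. z ^ v)"
      by (rule sum.reindex_bij_betw[OF bij1, of "\<lambda>v. z ^ v"])
    also have "\<dots> = 0" unfolding z_def using geo[OF n0, of k] k by auto
    finally show ?thesis unfolding z_def .
  qed
  define \<psi> where "\<psi> = (\<lambda>x::nat\<times>nat. (q * fst x + snd x) mod n)"
  have Nne: "card {x. x \<in> C \<times> S \<and> \<psi> x = g} \<noteq> 0" if g: "g < n" for g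
  proof -
    define A where "A = {x. x \<in> C \<times> S \<and> \<psi> x = g}"
    define N where "N = card A"
    have FB: "EE n (PC ^ q * PS) g = of_nat m ^ q * of_nat q"
    proof -
      have z: "om n ^ (k * (n - g)) * ev (PC ^ q * PS) (om n ^ k) = 0" if "k \<in> {..<n} - {0}" for k
      proof -
        have "ev (PC ^ q * PS) (om n ^ k) = ev PC (om n ^ k) ^ (q - 1) * (ev PC (om n ^ k) * ev PS (om n ^ k))"
        proof -
          obtain q' where q': "q = Suc q'" using q0 by (cases q) auto
          show ?thesis by (simp add: ev_mult ev_power q' mult_ac)
        qed
        then show ?thesis using prod0[of k] that by auto
      qed
      have "EE n (PC ^ q * PS) g = om n ^ (0 * (n - g)) * ev (PC ^ q * PS) (om n ^ 0) +
          (\<Sum>k\<in>{..<n} - {0}. om n ^ (k * (n - g)) * ev (PC ^ q * PS) (om n ^ k))"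
        unfolding EE_def using n0 by (subst sum.remove[of _ 0]) auto
      also have "(\<Sum>k\<in>{..<n} - {0}. om n ^ (k * (n - g)) * ev (PC ^ q * PS) (om n ^ k)) = 0"
        using z by (intro sum.neutral) blast
      finally show ?thesis using cC cS by (simp add: ev_mult ev_power evPC evPS)
    qed
    have FC: "EE n (T * PS) g = of_nat n * of_nat N"
    proof -
      have evT: "ev T z = (\<Sum>c\<in>C. z ^ (q * c))" for z
        unfolding T_def by (simp add: ev_sum ev_power ev_monom power_mult mult.commute)
      have evTPS: "ev (T*PS) z = (\<Sum>x\<in>C \<times> S. z^(q*fst x + snd x))" for z
        unfolding ev_mult evT evPS sum_product sum.cartesian_product by (simp add: power_add split_beta)
      have "EE n (T * PS) g = (\<Sum>k<n. \<Sum>x\<in>C \<times> S. om n ^ (k * (n - g)) * (om n ^ k) ^ (q * fst x + snd x))"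
        unfolding EE_def evTPS sum_distrib_left ..
      also have "\<dots> = (\<Sum>x\<in>C \<times> S. \<Sum>k<n. (om n ^ (n - g + (q * fst x + snd x))) ^ k)"
        by (subst sum.swap) (simp add: exp_shift)
      also have "\<dots> = (\<Sum>x\<in>C \<times> S. if (q * fst x + snd x) mod n = g then of_nat n else 0)"
        by (intro sum.cong refl) (simp add: geo[OF n0] dvd_shift_iff[OF g])
      also have "\<dots> = of_nat n * of_nat N"
        unfolding N_def A_def \<psi>_def by (simp add: sum.If_cases[OF fCS] Int_def)
      finally show ?thesis .
    qed
    define W where "W = (\<Sum>j\<le>degree (R * PS). if j mod n = g then coeff (R * PS) j else 0)"
    have FD: "EE n (R * PS) g = of_nat n * of_int W"
      unfolding EE_def W_def by (rule inversion[OF n0 g])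
    have "PC ^ q * PS = T * PS + of_nat p * (R * PS)" by (simp add: R algebra_simps)
    then have "EE n (PC ^ q * PS) g = EE n (T * PS) g + of_nat p * EE n (R * PS) g"
      by (simp add: EE_add EE_of_nat)
    then have "of_nat m ^ q * of_nat q = of_nat n * of_nat N + of_nat p * (of_nat n * of_int W :: complex)"
      using FB FC FD by simp
    then have "(of_int (int m ^ q * int q) :: complex) = of_int (int n * int N + int p * (int n * W))"
      by simp
    then have "int m ^ q * int q = int n * int N + int p * (int n * W)"
      using of_int_eq_iff by blast
    then have "int q * (int m ^ q) = int q * (int m * int N + int p * int m * W)"
      using nmq by (simp add: algebra_simps)
    then have e1: "int m ^ q = int m * int N + int p * int m * W" using q0 by simp
    obtain r where r: "(\<Sum>i<m. (1::int)) ^ q = (\<Sum>i<m. 1 ^ q) + of_nat p * r"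
      using frob_sum_pow[OF pp, of "\<lambda>_. (1::int)" "{..<m}" l] unfolding qdef by blast
    then have e2: "int m ^ q = int m + int p * r" by simp
    have "int m * (int N - 1) = int p * (r - int m * W)" using e1 e2 by (simp add: algebra_simps)
    then have "int p dvd int m * (int N - 1)" by simp
    moreover have "\<not> int p dvd int m" using pm m_def by simp
    moreover have "prime (int p)" using pp by simp
    ultimately have "int p dvd (int N - 1)" using prime_dvd_mult_iff by blast
    then have "N \<noteq> 0" using pp
    proof -
      assume h: "int p dvd int N - 1"
      show "N \<noteq> 0"
      proof
        assume "N = 0"
        then have "int p dvd 1" using h by simp
        then have "p = 1" by simp
        then show False using pp by simp
      qed
    qed
    then show ?thesis unfolding N_def A_def .
  qed
  have img: "\<psi> ` (C \<times> S) \<subseteq> {..<n}" unfolding \<psi>_def using n0 by auto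
  have sumN: "(\<Sum>g<n. card {x. x \<in> C \<times> S \<and> \<psi> x = g}) = n"
  proof -
    have "(\<Sum>g<n. card {x. x \<in> C \<times> S \<and> \<psi> x = g}) = (\<Sum>g<n. \<Sum>x\<in>{x. x \<in> C \<times> S \<and> \<psi> x = g}. (1::nat))"
      by simp
    also have "\<dots> = (\<Sum>x\<in>C \<times> S. 1)" by (rule sum.group[OF fCS _ img]) simp
    finally show ?thesis using cardCS by simp
  qed
  have one: "card {x. x \<in> C \<times> S \<and> \<psi> x = g} = 1" if g: "g < n" for g
  proof (rule ccontr)
    assume "card {x. x \<in> C \<times> S \<and> \<psi> x = g} \<noteq> 1"
    then have lt: "1 < card {x. x \<in> C \<times> S \<and> \<psi> x = g}" using Nne[OF g] by simp
    have "(\<Sum>g<n. (1::nat)) < (\<Sum>g<n. card {x. x \<in> C \<times> S \<and> \<psi> x = g})"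
      by (rule sum_strict_mono_ex1) (use Nne lt g in \<open>auto simp: Suc_le_eq\<close>)
    then show False using sumN by simp
  qed
  show ?thesis
  proof (intro allI impI)
    fix g assume g: "g < n"
    from one[OF g] obtain a where eq: "{x. x \<in> C \<times> S \<and> \<psi> x = g} = {a}" by (rule card_1_singletonE)
    have H0: "x \<in> {x. x \<in> C \<times> S \<and> \<psi> x = g} \<longleftrightarrow> x \<in> {a}" for x by (simp only: eq)
    have H: "(x \<in> C \<times> S \<and> \<psi> x = g) \<longleftrightarrow> x = a" for x
      using H0[of x] by (simp only: mem_Collect_eq singleton_iff)
    have a1: "a \<in> C \<times> S \<and> \<psi> a = g" using H[of a] by simp
    have a2: "y = a" if "y \<in> C \<times> S \<and> \<psi> y = g" for y using H[of y] that by simp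
    have "\<exists>!x. x \<in> C \<times> S \<and> \<psi> x = g" using a1 a2 by (rule ex1I)
    then show "\<exists>!x. x \<in> C \<times> S \<and> (q * fst x + snd x) mod n = g" unfolding \<psi>_def .
  qed
qed



lemma adj_iff:
  assumes "u < n" "v < n" "S \<subseteq> {0..<n}"
  shows "circ_adj n S u v \<longleftrightarrow> (\<exists>s\<in>S. (u + s) mod n = v)"
proof
  assume "circ_adj n S u v"
  then have sS: "nat ((int v - int u) mod int n) \<in> S" by (simp add: circ_adj_def)
  define s where "s = nat ((int v - int u) mod int n)"
  have n0: "n > 0" using assms by simp
  have "int ((u + s) mod n) = (int u + (int v - int u) mod int n) mod int n"
    using n0 by (simp add: s_def zmod_int of_nat_mod)
  also have "\<dots> = (int u + (int v - int u)) mod int n" by (simp add: mod_add_right_eq)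
  also have "\<dots> = int v" using assms by simp
  finally have "(u + s) mod n = v" by linarith
  moreover have "s \<in> S" using sS s_def by simp
  ultimately show "\<exists>s\<in>S. (u + s) mod n = v" by blast
next
  assume "\<exists>s\<in>S. (u + s) mod n = v"
  then obtain s where s: "s \<in> S" "(u + s) mod n = v" by blast
  have sn: "s < n" using s assms by auto
  have "(int v - int u) mod int n = ((int u + int s) mod int n - int u) mod int n"
    using s(2) by (metis of_nat_add zmod_int)
  also have "\<dots> = (int u + int s - int u) mod int n" by (simp add: mod_diff_left_eq)
  also have "\<dots> = int s" using sn by simp
  finally show "circ_adj n S u v" using s assms by (simp add: circ_adj_def)
qed

lemma neg_shift:
  fixes x s n y :: nat
  assumes "(x + s) mod n = y" "s \<le> n"
  shows "(y + (n - s) mod n) mod n = x mod n"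
proof -
  have "(y + (n - s) mod n) mod n = (y + (n - s)) mod n" by (rule mod_add_right_eq)
  also have "\<dots> = ((x + s) mod n + (n - s)) mod n" using assms(1) by simp
  also have "\<dots> = (x + s + (n - s)) mod n" by (rule mod_add_left_eq)
  finally have "(y + (n - s) mod n) mod n = (x + s + (n - s)) mod n" .
  also have "x + s + (n - s) = x + n" using assms(2) by simp
  finally show ?thesis by simp
qed

lemma card_tile:
  assumes "finite A" "\<forall>x\<in>A. \<phi> x < n" "\<forall>v<n. \<exists>!x. x\<in>A \<and> \<phi> x = v"
  shows "card A = n"
  using bij_betw_same_card[OF tile_bij[OF assms]] by simp

theorem theorem1p4:
  fixes n l p :: nat and S :: "nat set"
  assumes "0 < n" and "0 < l" and "prime p"
    and "p ^ l dvd n" and "\<not> p ^ (l + 1) dvd n"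
    and "connection_set n S" and "card S = p ^ l"
    and "circ_connected n S"
  shows "(\<exists>C. is_total_perfect_code n S C) \<longleftrightarrow>
         (\<forall>s\<in>S. \<forall>s'\<in>S. s \<noteq> s' \<longrightarrow> s mod p ^ l \<noteq> s' mod p ^ l)"
proof -
  note n0 = assms(1) and pp = assms(3) and qn = assms(4) and npl = assms(5)
  define q where "q = p ^ l"
  have q0: "q > 0" using pp prime_gt_0_nat q_def by simp
  have qn': "q dvd n" using qn q_def by simp
  have Sn: "S \<subseteq> {0..<n}" and S0: "0 \<notin> S" and Sneg: "\<forall>s\<in>S. (n - s) mod n \<in> S"
    using assms(6) by (auto simp: connection_set_def)
  have cS: "card S = q" using assms(7) q_def by simp
  have fS: "finite S" using Sn finite_subset by blast
  have pm: "\<not> p dvd (n div q)"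
  proof
    assume "p dvd n div q"
    then obtain k where "n div q = p * k" by blast
    then have "n = p ^ (l + 1) * k" using qn' q_def by (metis dvd_mult_div_cancel mult.assoc power_Suc2 Suc_eq_plus1)
    then show False using npl by simp
  qed
  show ?thesis
  proof
    assume "\<exists>C. is_total_perfect_code n S C"
    then obtain C where C: "C \<subseteq> {0..<n}" "\<forall>v<n. \<exists>!c. c \<in> C \<and> circ_adj n S v c"
      by (auto simp: is_total_perfect_code_def)
    have TPC: "\<forall>v<n. \<exists>!c. c \<in> C \<and> (\<exists>s\<in>S. (v + s) mod n = c)"
    proof (intro allI impI)
      fix v assume v: "v < n"
      have eqv: "c \<in> C \<and> circ_adj n S v c \<longleftrightarrow> c \<in> C \<and> (\<exists>s\<in>S. (v + s) mod n = c)" for c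
        using adj_iff[OF v _ Sn, of c] C(1) n0 by auto
      have E: "\<exists>!c. c \<in> C \<and> circ_adj n S v c" using C(2) v by blast
      then show "\<exists>!c. c \<in> C \<and> (\<exists>s\<in>S. (v + s) mod n = c)" by (simp only: eqv)
    qed
    have tile: "\<forall>v<n. \<exists>!x. x \<in> C \<times> S \<and> (fst x + snd x) mod n = v"
    proof (intro allI impI)
      fix v assume v: "v < n"
      obtain c s where cs: "c \<in> C" "s \<in> S" "(v + s) mod n = c" using TPC v by blast
      have s': "(n - s) mod n \<in> S" using Sneg cs by blast
      have sn: "s \<le> n" using cs Sn by auto
      have e: "(c + (n - s) mod n) mod n = v" using neg_shift[OF cs(3) sn] v by simp
      show "\<exists>!x. x \<in> C \<times> S \<and> (fst x + snd x) mod n = v"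
      proof (rule ex1I[of _ "(c, (n - s) mod n)"])
        show "(c, (n - s) mod n) \<in> C \<times> S \<and> (fst (c, (n - s) mod n) + snd (c, (n - s) mod n)) mod n = v"
          using cs s' e by simp
      next
        fix y assume y: "y \<in> C \<times> S \<and> (fst y + snd y) mod n = v"
        obtain c1 s1 where y1: "y = (c1, s1)" by (cases y)
        have c1: "c1 \<in> C" "s1 \<in> S" "(c1 + s1) mod n = v" using y y1 by auto
        have s1n: "s1 \<le> n" using c1 Sn by auto
        have c1n: "c1 < n" using c1 C(1) by auto
        have "(v + (n - s1) mod n) mod n = c1" using neg_shift[OF c1(3) s1n] c1n by simp
        moreover have "(n - s1) mod n \<in> S" using Sneg c1 by blast
        ultimately have "\<exists>s\<in>S. (v + s) mod n = c1" by blast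
        then have cc: "c1 = c" using TPC v cs c1(1) by blast
        have "[c + s1 = c + (n - s) mod n] (mod n)"
          using c1(3) e cc by (simp add: cong_def)
        then have "[s1 = (n - s) mod n] (mod n)" using cong_add_lcancel_nat by blast
        then have "s1 = (n - s) mod n" using c1(2) Sn by (auto simp: cong_def)
        then show "y = (c, (n - s) mod n)" using y1 cc by simp
      qed
    qed
    have K: "\<forall>v<n. \<exists>!x. x \<in> C \<times> S \<and> (q * fst x + snd x) mod n = v"
      by (rule key[OF n0 pp q_def qn' pm _ _ cS tile]) (use C Sn in auto)
    have fC: "finite C" using C(1) finite_subset by blast
    define m where "m = n div q"
    have nmq: "n = m * q" using qn' m_def by simp
    have cardCS: "card (C \<times> S) = n"
      by (rule card_tile[where \<phi> = "\<lambda>x. (fst x + snd x) mod n"]) (use fC fS tile n0 in auto)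
    have cC: "card C = m" using cardCS nmq cS q0 by (simp add: card_cartesian_product)
    obtain s0 where s0: "s0 \<in> S" using cS q0 by (metis card.empty ex_in_conv less_irrefl)
    define f where "f = (\<lambda>c. (q * c) mod n)"
    have injf: "inj_on f C"
    proof (rule inj_onI)
      fix c1 c2 assume c: "c1 \<in> C" "c2 \<in> C" "f c1 = f c2"
      define v where "v = (q * c1 + s0) mod n"
      have vn: "v < n" using n0 v_def by simp
      have e2: "(q * c2 + s0) mod n = v"
        using c(3) unfolding f_def v_def by (metis mod_add_left_eq)
      have "(c1, s0) = (c2, s0)"
        using K vn c(1,2) s0 e2 unfolding v_def by (metis (no_types, lifting) fst_conv snd_conv mem_Sigma_iff)
      then show "c1 = c2" by simp
    qed
    define M where "M = {h. h < n \<and> q dvd h}"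
    have M_eq: "M = (\<lambda>i. q * i) ` {..<m}"
    proof
      show "M \<subseteq> (\<lambda>i. q * i) ` {..<m}"
      proof
        fix h assume "h \<in> M"
        then obtain i where "h = q * i" "h < n" unfolding M_def by auto
        then have "i < m" using nmq q0 by (simp add: mult.commute)
        then show "h \<in> (\<lambda>i. q * i) ` {..<m}" using \<open>h = q * i\<close> by blast
      qed
    next
      show "(\<lambda>i. q * i) ` {..<m} \<subseteq> M" unfolding M_def using nmq q0 by (auto simp: mult.commute)
    qed
    have cM: "card M = m" unfolding M_eq using q0 by (simp add: card_image inj_on_def)
    have fCM: "f ` C \<subseteq> M" unfolding f_def M_def using n0 qn' by (auto simp: dvd_mod)
    have fCeq: "f ` C = M"
      by (rule card_subset_eq) (use fCM cM cC card_image[OF injf] M_eq in auto)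
    have dist: False if s12: "s1 \<in> S" "s2 \<in> S" "s1 < s2" "s1 mod q = s2 mod q" for s1 s2
    proof -
      define d where "d = s2 - s1"
      have s2n: "s2 < n" using s12 Sn by auto
      have qd: "q dvd d" unfolding d_def using s12 mod_eq_dvd_iff_nat[of s1 s2 q] by simp
      have "d \<in> M" unfolding M_def using qd s2n d_def by auto
      then obtain c1 where c1: "c1 \<in> C" "f c1 = d" using fCeq by blast
      have "0 \<in> M" unfolding M_def using n0 by auto
      then obtain c0 where c0: "c0 \<in> C" "f c0 = 0" using fCeq by (metis imageE)
      have e0: "(q * c0 + s2) mod n = s2"
        using c0(2) s2n unfolding f_def by (metis mod_add_left_eq add_0 mod_less)
      have e1: "(q * c1 + s1) mod n = s2"
      proof -
        have "(q * c1 + s1) mod n = (d + s1) mod n" using c1(2) unfolding f_def by (metis mod_add_left_eq)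
        also have "d + s1 = s2" using s12 d_def by simp
        finally show ?thesis using s2n by simp
      qed
      have "(c0, s2) = (c1, s1)"
        using K s2n c0(1) c1(1) s12(1,2) e0 e1
        by (metis (no_types, lifting) fst_conv snd_conv mem_Sigma_iff)
      then show False using s12 by simp
    qed
    show "\<forall>s\<in>S. \<forall>s'\<in>S. s \<noteq> s' \<longrightarrow> s mod p ^ l \<noteq> s' mod p ^ l"
    proof (intro ballI impI)
      fix s s' assume h: "s \<in> S" "s' \<in> S" "s \<noteq> s'"
      show "s mod p ^ l \<noteq> s' mod p ^ l"
      proof
        assume e: "s mod p ^ l = s' mod p ^ l"
        show False
        proof (cases "s < s'")
          case True then show False using dist[of s s'] h e q_def by simp
        next
          case False then have "s' < s" using h by simp
          then show False using dist[of s' s] h e q_def by simp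
        qed
      qed
    qed
  next
    assume D: "\<forall>s\<in>S. \<forall>s'\<in>S. s \<noteq> s' \<longrightarrow> s mod p ^ l \<noteq> s' mod p ^ l"
    define C where "C = {c. c < n \<and> q dvd c}"
    have injm: "inj_on (\<lambda>s. s mod q) S" using D q_def by (auto simp: inj_on_def)
    have imS: "(\<lambda>s. s mod q) ` S = {..<q}"
      by (rule card_subset_eq) (use q0 cS card_image[OF injm] in auto)
    have "is_total_perfect_code n S C"
      unfolding is_total_perfect_code_def
    proof (intro conjI allI impI)
      show "C \<subseteq> {0..<n}" unfolding C_def by auto
    next
      fix v assume v: "v < n"
      have iff: "c \<in> C \<and> circ_adj n S v c \<longleftrightarrow> c \<in> C \<and> (\<exists>s\<in>S. (v + s) mod n = c)" for c
        using adj_iff[OF v _ Sn, of c] n0 by (auto simp: C_def)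
      define r where "r = (q - v mod q) mod q"
      have "r \<in> {..<q}" unfolding r_def using q0 by simp
      then obtain s where s: "s \<in> S" "s mod q = r" using imS by (metis imageE)
      have vs: "(v + s) mod q = 0"
      proof -
        have "(v + s) mod q = (v mod q + s mod q) mod q" by (simp add: mod_add_eq)
        also have "\<dots> = (v mod q + (q - v mod q)) mod q" unfolding s(2) r_def by (simp add: mod_add_right_eq)
        also have "v mod q + (q - v mod q) = q" using q0 by (simp add: less_imp_le)
        finally show ?thesis by simp
      qed
      have ex: "(v + s) mod n \<in> C"
        unfolding C_def using n0 vs qn' by (auto simp: mod_mod_cancel dvd_mod dvd_eq_mod_eq_0)
      have uq: "c1 = (v + s) mod n" if "c1 \<in> C" "s1 \<in> S" "(v + s1) mod n = c1" for c1 s1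
      proof -
        have "q dvd c1" using that(1) C_def by simp
        then have "(v + s1) mod q = 0" using that(3) qn'
          by (metis dvd_eq_mod_eq_0 mod_mod_cancel)
        then have "[v + s1 = v + s] (mod q)" using vs by (simp add: cong_def)
        then have "[s1 = s] (mod q)" using cong_add_lcancel_nat by blast
        then have "s1 = s" using D that(2) s(1) q_def by (auto simp: cong_def)
        then show ?thesis using that(3) by simp
      qed
      show "\<exists>!c. c \<in> C \<and> circ_adj n S v c"
        unfolding iff
      proof (rule ex1I[of _ "(v + s) mod n"])
        show "(v + s) mod n \<in> C \<and> (\<exists>s'\<in>S. (v + s') mod n = (v + s) mod n)" using ex s(1) by blast
      next
        fix c assume "c \<in> C \<and> (\<exists>s\<in>S. (v + s) mod n = c)"
        then show "c = (v + s) mod n" using uq by blast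
      qed
    qed
    then show "\<exists>C. is_total_perfect_code n S C" by blast
  qed
qed

end
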